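(* Let $G$ be a group. Then $G$ is sofic as a group if and only if $G$ is sofic as a monoid.
   Context: For a non-empty finite set $X$, $\mathrm{Map}(X)$ is the monoid of all maps $X\to X$ under composition (identity $\mathrm{Id}_X$), and $\mathrm{Sym}(X)$ its group of bijections; both carry the Hamming metric $d_X(f,g)=|\{x\in X : f(x)\ne g(x)\}|/|X|$. A group $G$ is sofic as a group if for every finite $K\subset G$ and every $\varepsilon>0$ there exist a non-empty finite set $X$ and a map $\varphi\colon G\to\mathrm{Sym}(X)$ such that $d_X(\varphi(gh),\varphi(g)\varphi(h))\le\varepsilon$ for all $g,h\in K$ and $d_X(\varphi(g),\varphi(h))\ge 1-\varepsilon$ for all distinct $g,h\in K$ (the standard notion of sofic group). For a monoid $M$, finite $K\subset M$ and $\varepsilon,\alpha>0$, a map $\varphi\colon M\to\mathrm{Map}(X)$ is a $(K,\varepsilon)$-morphism if $d_X(\varphi(k_1k_2),\varphi(k_1)\varphi(k_2))\le\varepsilon$ for all $k_1,k_2\in K$ and $d_X(\varphi(1_M),\mathrm{Id}_X)\le\varepsilon$; it is $(K,\alpha)$-injective if $d_X(\varphi(k_1),\varphi(k_2))\ge\alpha$ for all distinct $k_1,k_2\in K$. A monoid $M$ is sofic (as a monoid) if for every finite $K\subset M$ and $\varepsilon>0$ there are a non-empty finite set $X$ and a $(K,1-\varepsilon)$-injective $(K,\varepsilon)$-morphism $\varphi\colon M\to\mathrm{Map}(X)$. *)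

theory Defs
  imports Complex_Main "HOL-Algebra.Group"
begin

text \<open>Finite sets X are represented as finite subsets of nat (every finite set is in
bijection with one). Maps X to X are functions nat to nat sending X into X; only
their values on X matter.\<close>

definition hamming :: "nat set \<Rightarrow> (nat \<Rightarrow> nat) \<Rightarrow> (nat \<Rightarrow> nat) \<Rightarrow> real" where
  "hamming X f g = real (card {x \<in> X. f x \<noteq> g x}) / real (card X)"

definition sofic_group :: "('a, 'b) monoid_scheme \<Rightarrow> bool" where
  "sofic_group G \<longleftrightarrow>
    (\<forall>K \<subseteq> carrier G. finite K \<longrightarrow> (\<forall>\<epsilon>::real. \<epsilon> > 0 \<longrightarrow>
      (\<exists>(X::nat set) (\<phi>::'a \<Rightarrow> nat \<Rightarrow> nat). finite X \<and> X \<noteq> {} \<and>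
         (\<forall>g \<in> carrier G. bij_betw (\<phi> g) X X) \<and>
         (\<forall>g \<in> K. \<forall>h \<in> K. hamming X (\<phi> (g \<otimes>\<^bsub>G\<^esub> h)) (\<phi> g \<circ> \<phi> h) \<le> \<epsilon>) \<and>
         (\<forall>g \<in> K. \<forall>h \<in> K. g \<noteq> h \<longrightarrow> hamming X (\<phi> g) (\<phi> h) \<ge> 1 - \<epsilon>))))"

definition is_morphism_approx ::
  "('a, 'b) monoid_scheme \<Rightarrow> nat set \<Rightarrow> 'a set \<Rightarrow> real \<Rightarrow> ('a \<Rightarrow> nat \<Rightarrow> nat) \<Rightarrow> bool" where
  "is_morphism_approx M X K \<epsilon> \<phi> \<longleftrightarrow>
     (\<forall>k1 \<in> K. \<forall>k2 \<in> K. hamming X (\<phi> (k1 \<otimes>\<^bsub>M\<^esub> k2)) (\<phi> k1 \<circ> \<phi> k2) \<le> \<epsilon>) \<and>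
     hamming X (\<phi> \<one>\<^bsub>M\<^esub>) id \<le> \<epsilon>"

definition is_injective_approx ::
  "nat set \<Rightarrow> 'a set \<Rightarrow> real \<Rightarrow> ('a \<Rightarrow> nat \<Rightarrow> nat) \<Rightarrow> bool" where
  "is_injective_approx X K \<alpha> \<phi> \<longleftrightarrow>
     (\<forall>k1 \<in> K. \<forall>k2 \<in> K. k1 \<noteq> k2 \<longrightarrow> hamming X (\<phi> k1) (\<phi> k2) \<ge> \<alpha>)"

definition sofic_monoid :: "('a, 'b) monoid_scheme \<Rightarrow> bool" where
  "sofic_monoid M \<longleftrightarrow>
    (\<forall>K \<subseteq> carrier M. finite K \<longrightarrow> (\<forall>\<epsilon>::real. \<epsilon> > 0 \<longrightarrow>
      (\<exists>(X::nat set) (\<phi>::'a \<Rightarrow> nat \<Rightarrow> nat). finite X \<and> X \<noteq> {} \<and>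
         (\<forall>m \<in> carrier M. \<phi> m ` X \<subseteq> X) \<and>
         is_injective_approx X K (1 - \<epsilon>) \<phi> \<and>
         is_morphism_approx M X K \<epsilon> \<phi>)))"

end

theory Submission
  imports Defs
begin

abbreviation cnt :: "nat set \<Rightarrow> (nat \<Rightarrow> nat) \<Rightarrow> (nat \<Rightarrow> nat) \<Rightarrow> real" where
  "cnt X f g \<equiv> real (card {x\<in>X. f x \<noteq> g x})"

lemma cnt_sym: "cnt X f g = cnt X g f"
  by (metis (mono_tags, lifting) Collect_cong)

lemma cnt_tri:
  assumes "finite X"
  shows "cnt X f h \<le> cnt X f g + cnt X g h"
proof -
  have "card {x\<in>X. f x \<noteq> h x} \<le> card ({x\<in>X. f x \<noteq> g x} \<union> {x\<in>X. g x \<noteq> h x})"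
    by (rule card_mono) (use assms in auto)
  also have "\<dots> \<le> card {x\<in>X. f x \<noteq> g x} + card {x\<in>X. g x \<noteq> h x}"
    by (rule card_Un_le)
  finally show ?thesis
    unfolding of_nat_add[symmetric] of_nat_le_iff .
qed

lemma cnt_comp_left:
  assumes "finite X"
  shows "cnt X (\<lambda>x. a (f x)) (\<lambda>x. a (g x)) \<le> cnt X f g"
  unfolding of_nat_le_iff by (rule card_mono) (use assms in auto)

lemma cnt_comp_right:
  assumes "finite X" "bij_betw q X X"
  shows "cnt X (\<lambda>x. a (f x)) (\<lambda>x. b (f x)) \<le> 2 * cnt X f q + cnt X a b"
proof -
  have inj: "inj_on q X" and im: "q ` X = X" using assms(2) by (auto simp: bij_betw_def)
  have "card {x\<in>X. a (q x) \<noteq> b (q x)} \<le> card {y\<in>X. a y \<noteq> b y}"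
    by (rule card_inj_on_le[where f=q]) (use inj im assms(1) in \<open>auto simp: inj_on_def\<close>)
  hence m: "cnt X (\<lambda>x. a (q x)) (\<lambda>x. b (q x)) \<le> cnt X a b" by simp
  have 1: "cnt X (\<lambda>x. a (f x)) (\<lambda>x. a (q x)) \<le> cnt X f q"
    by (rule cnt_comp_left[OF assms(1)])
  have 3: "cnt X (\<lambda>x. b (q x)) (\<lambda>x. b (f x)) \<le> cnt X f q"
    using cnt_comp_left[OF assms(1), of b q f] cnt_sym[of X q f] by simp
  have "cnt X (\<lambda>x. a (f x)) (\<lambda>x. b (f x)) \<le> cnt X (\<lambda>x. a (f x)) (\<lambda>x. a (q x)) + cnt X (\<lambda>x. a (q x)) (\<lambda>x. b (f x))"
    by (rule cnt_tri[OF assms(1)])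
  moreover have "cnt X (\<lambda>x. a (q x)) (\<lambda>x. b (f x)) \<le> cnt X (\<lambda>x. a (q x)) (\<lambda>x. b (q x)) + cnt X (\<lambda>x. b (q x)) (\<lambda>x. b (f x))"
    by (rule cnt_tri[OF assms(1)])
  ultimately show ?thesis using 1 3 m by linarith
qed

lemma fix_bij:
  assumes X: "finite X" and f: "f ` X \<subseteq> X" and g: "g ` X \<subseteq> X"
  shows "\<exists>p. bij_betw p X X \<and> cnt X p f \<le> cnt X (\<lambda>x. f (g x)) id"
proof -
  define A where "A = {x\<in>X. f (g x) = x}"
  define B where "B = g ` A"
  have AX: "A \<subseteq> X" unfolding A_def by auto
  have BX: "B \<subseteq> X" unfolding B_def A_def using g by auto
  have injg: "inj_on g A" unfolding A_def inj_on_def by (metis (mono_tags, lifting) mem_Collect_eq)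
  have bf: "bij_betw f B A"
  proof -
    have "f ` B = A" unfolding B_def A_def by force
    moreover have "card B = card A" unfolding B_def using card_image[OF injg] .
    moreover have "finite B" using BX X finite_subset by blast
    ultimately show ?thesis using card_image_le eq_card_imp_inj_on bij_betw_def by metis
  qed
  have cA: "card A = card B" using bf bij_betw_same_card by metis
  have "card (X - B) = card (X - A)"
    using cA AX BX X by (simp add: card_Diff_subset finite_subset)
  then obtain h where h: "bij_betw h (X - B) (X - A)"
    using finite_same_card_bij X by (meson finite_Diff)
  define p where "p = (\<lambda>x. if x \<in> B then f x else h x)"
  have "bij_betw p (B \<union> (X - B)) (A \<union> (X - A))"
    unfolding p_def by (rule bij_betw_disjoint_Un[OF bf h]) auto
  moreover have "B \<union> (X - B) = X" "A \<union> (X - A) = X" using AX BX by auto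
  ultimately have bp: "bij_betw p X X" by simp
  have "card {x\<in>X. p x \<noteq> f x} \<le> card (X - B)"
    by (rule card_mono) (use X in \<open>auto simp: p_def\<close>)
  also have "\<dots> = card (X - A)" by fact
  also have "X - A = {x\<in>X. f (g x) \<noteq> id x}" unfolding A_def by auto
  finally show ?thesis using bp by (intro exI[of _ p]) simp
qed

lemma ham_le: "finite X \<Longrightarrow> X \<noteq> {} \<Longrightarrow> hamming X f g \<le> e \<longleftrightarrow> cnt X f g \<le> e * real (card X)"
  unfolding hamming_def by (simp add: pos_divide_le_eq card_gt_0_iff)

lemma ham_ge: "finite X \<Longrightarrow> X \<noteq> {} \<Longrightarrow> e \<le> hamming X f g \<longleftrightarrow> e * real (card X) \<le> cnt X f g"
  unfolding hamming_def by (simp add: pos_le_divide_eq card_gt_0_iff)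

theorem proposition3p4:
  fixes G :: "('a, 'b) monoid_scheme"
  assumes "group G"
  shows "sofic_group G \<longleftrightarrow> sofic_monoid G"
proof
  interpret group G by fact
  assume sg: "sofic_group G"
  show "sofic_monoid G" unfolding sofic_monoid_def
  proof (intro allI impI)
    fix K and e :: real assume K: "K \<subseteq> carrier G" "finite K" and e: "0 < e"
    have K1: "insert \<one>\<^bsub>G\<^esub> K \<subseteq> carrier G" "finite (insert \<one>\<^bsub>G\<^esub> K)" using K by auto
    obtain X \<phi> where X: "finite X" "X \<noteq> {}" and bij: "\<forall>g\<in>carrier G. bij_betw (\<phi> g) X X"
      and mor: "\<forall>g\<in>insert \<one>\<^bsub>G\<^esub> K. \<forall>h\<in>insert \<one>\<^bsub>G\<^esub> K. hamming X (\<phi> (g \<otimes>\<^bsub>G\<^esub> h)) (\<phi> g \<circ> \<phi> h) \<le> e"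
      and inj: "\<forall>g\<in>insert \<one>\<^bsub>G\<^esub> K. \<forall>h\<in>insert \<one>\<^bsub>G\<^esub> K. g \<noteq> h \<longrightarrow> hamming X (\<phi> g) (\<phi> h) \<ge> 1 - e"
      using sg[unfolded sofic_group_def, rule_format, OF K1 e] by blast
    have b1: "bij_betw (\<phi> \<one>\<^bsub>G\<^esub>) X X" using bij by auto
    have "card {x\<in>X. \<phi> \<one>\<^bsub>G\<^esub> x \<noteq> id x} \<le> card {x\<in>X. \<phi> (\<one>\<^bsub>G\<^esub> \<otimes>\<^bsub>G\<^esub> \<one>\<^bsub>G\<^esub>) x \<noteq> (\<phi> \<one>\<^bsub>G\<^esub> \<circ> \<phi> \<one>\<^bsub>G\<^esub>) x}"
    proof (rule card_mono)
      show "finite {x \<in> X. \<phi> (\<one>\<^bsub>G\<^esub> \<otimes>\<^bsub>G\<^esub> \<one>\<^bsub>G\<^esub>) x \<noteq> (\<phi> \<one>\<^bsub>G\<^esub> \<circ> \<phi> \<one>\<^bsub>G\<^esub>) x}" using X by auto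
      show "{x \<in> X. \<phi> \<one>\<^bsub>G\<^esub> x \<noteq> id x} \<subseteq> {x \<in> X. \<phi> (\<one>\<^bsub>G\<^esub> \<otimes>\<^bsub>G\<^esub> \<one>\<^bsub>G\<^esub>) x \<noteq> (\<phi> \<one>\<^bsub>G\<^esub> \<circ> \<phi> \<one>\<^bsub>G\<^esub>) x}"
      proof clarsimp
        fix x assume x: "x \<in> X" "\<phi> \<one>\<^bsub>G\<^esub> x \<noteq> x" "\<phi> \<one>\<^bsub>G\<^esub> x = \<phi> \<one>\<^bsub>G\<^esub> (\<phi> \<one>\<^bsub>G\<^esub> x)"
        have "\<phi> \<one>\<^bsub>G\<^esub> x \<in> X" using b1 x(1) bij_betw_apply by metis
        then show False using x b1 unfolding bij_betw_def inj_on_def by metis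
      qed
    qed
    hence "hamming X (\<phi> \<one>\<^bsub>G\<^esub>) id \<le> hamming X (\<phi> (\<one>\<^bsub>G\<^esub> \<otimes>\<^bsub>G\<^esub> \<one>\<^bsub>G\<^esub>)) (\<phi> \<one>\<^bsub>G\<^esub> \<circ> \<phi> \<one>\<^bsub>G\<^esub>)"
      unfolding hamming_def by (intro divide_right_mono) auto
    also have "\<dots> \<le> e" using mor by auto
    finally have one: "hamming X (\<phi> \<one>\<^bsub>G\<^esub>) id \<le> e" .
    show "\<exists>X \<phi>. finite X \<and> X \<noteq> {} \<and> (\<forall>m\<in>carrier G. \<phi> m ` X \<subseteq> X) \<and>
           is_injective_approx X K (1 - e) \<phi> \<and> is_morphism_approx G X K e \<phi>"
      unfolding is_injective_approx_def is_morphism_approx_def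
      using X bij one mor inj bij_betw_imp_surj_on by (intro exI[of _ X] exI[of _ \<phi>]) fastforce
  qed
next
  interpret group G by fact
  assume sm: "sofic_monoid G"
  show "sofic_group G" unfolding sofic_group_def
  proof (intro allI impI)
    fix K and e :: real assume K: "K \<subseteq> carrier G" "finite K" and e: "0 < e"
    define d where "d = e / 11"
    have d: "0 < d" "11 * d = e" using e unfolding d_def by auto
    define K1 where "K1 = insert \<one>\<^bsub>G\<^esub> (K \<union> (\<lambda>(a,b). a \<otimes>\<^bsub>G\<^esub> b) ` (K \<times> K))"
    define K2 where "K2 = K1 \<union> (\<lambda>a. inv\<^bsub>G\<^esub> a) ` K1"
    have K1c: "K1 \<subseteq> carrier G" unfolding K1_def using K by auto
    have K2c: "K2 \<subseteq> carrier G" unfolding K2_def using K1c by auto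
    have K2f: "finite K2" unfolding K2_def K1_def using K by auto
    have K2inv: "inv\<^bsub>G\<^esub> g \<in> K2" if "g \<in> K2" for g
      using that K1c unfolding K2_def by (auto simp: image_iff)
    have KK2: "g \<in> K2" "g \<otimes>\<^bsub>G\<^esub> h \<in> K2" if "g \<in> K" "h \<in> K" for g h
      using that unfolding K2_def K1_def by auto
    have oneK2: "\<one>\<^bsub>G\<^esub> \<in> K2" unfolding K2_def K1_def by auto
    obtain X \<phi> where X: "finite X" "X \<noteq> {}" and im: "\<forall>m\<in>carrier G. \<phi> m ` X \<subseteq> X"
      and inj: "is_injective_approx X K2 (1 - d) \<phi>" and mor: "is_morphism_approx G X K2 d \<phi>"
      using sm[unfolded sofic_monoid_def, rule_format, OF K2c K2f d(1)] by blast
    define n where "n = real (card X)"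
    have mor': "cnt X (\<phi> (a \<otimes>\<^bsub>G\<^esub> b)) (\<lambda>x. \<phi> a (\<phi> b x)) \<le> d * n" if "a \<in> K2" "b \<in> K2" for a b
      using mor that ham_le[OF X] unfolding is_morphism_approx_def n_def by (auto simp: comp_def)
    have one': "cnt X (\<phi> \<one>\<^bsub>G\<^esub>) id \<le> d * n"
      using mor ham_le[OF X] unfolding is_morphism_approx_def n_def by auto
    have inj': "(1 - d) * n \<le> cnt X (\<phi> a) (\<phi> b)" if "a \<in> K2" "b \<in> K2" "a \<noteq> b" for a b
      using inj that ham_ge[OF X] unfolding is_injective_approx_def n_def by auto
    have close: "\<exists>p. bij_betw p X X \<and> cnt X p (\<phi> g) \<le> 2 * d * n" if g: "g \<in> K2" for g
    proof -
      have gi: "inv\<^bsub>G\<^esub> g \<in> K2" using K2inv[OF g] .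
      have gc: "g \<in> carrier G" "inv\<^bsub>G\<^esub> g \<in> carrier G" using g gi K2c by auto
      have "cnt X (\<lambda>x. \<phi> g (\<phi> (inv\<^bsub>G\<^esub> g) x)) id \<le> cnt X (\<lambda>x. \<phi> g (\<phi> (inv\<^bsub>G\<^esub> g) x)) (\<phi> \<one>\<^bsub>G\<^esub>) + cnt X (\<phi> \<one>\<^bsub>G\<^esub>) id"
        by (rule cnt_tri[OF X(1)])
      also have "cnt X (\<lambda>x. \<phi> g (\<phi> (inv\<^bsub>G\<^esub> g) x)) (\<phi> \<one>\<^bsub>G\<^esub>) \<le> d * n"
        using mor'[OF g gi] cnt_sym[of X "\<phi> \<one>\<^bsub>G\<^esub>"] gc by simp
      finally have c: "cnt X (\<lambda>x. \<phi> g (\<phi> (inv\<^bsub>G\<^esub> g) x)) id \<le> 2 * d * n" using one' by linarith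
      obtain p where "bij_betw p X X" "cnt X p (\<phi> g) \<le> cnt X (\<lambda>x. \<phi> g (\<phi> (inv\<^bsub>G\<^esub> g) x)) id"
        using fix_bij[OF X(1)] im gc by blast
      then show ?thesis using c by (intro exI[of _ p]) auto
    qed
    define \<psi> where "\<psi> g = (if g \<in> K2 then SOME p. bij_betw p X X \<and> cnt X p (\<phi> g) \<le> 2 * d * n else id)" for g
    have \<psi>: "bij_betw (\<psi> g) X X \<and> cnt X (\<psi> g) (\<phi> g) \<le> 2 * d * n" if "g \<in> K2" for g
      using someI_ex[OF close[OF that]] that unfolding \<psi>_def by simp
    have \<psi>': "cnt X (\<phi> g) (\<psi> g) \<le> 2 * d * n" if "g \<in> K2" for g
      using \<psi>[OF that] cnt_sym[of X "\<phi> g"] by simp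
    have bij: "bij_betw (\<psi> g) X X" for g
      using \<psi> unfolding \<psi>_def by (cases "g \<in> K2") auto
    show "\<exists>X \<phi>. finite X \<and> X \<noteq> {} \<and> (\<forall>g\<in>carrier G. bij_betw (\<phi> g) X X) \<and>
            (\<forall>g\<in>K. \<forall>h\<in>K. hamming X (\<phi> (g \<otimes>\<^bsub>G\<^esub> h)) (\<phi> g \<circ> \<phi> h) \<le> e) \<and>
            (\<forall>g\<in>K. \<forall>h\<in>K. g \<noteq> h \<longrightarrow> 1 - e \<le> hamming X (\<phi> g) (\<phi> h))"
    proof (intro exI[of _ X] exI[of _ \<psi>] conjI ballI impI)
      show "finite X" "X \<noteq> {}" by (fact X)+
      show "bij_betw (\<psi> g) X X" for g by (rule bij)
    next
      fix g h assume gh: "g \<in> K" "h \<in> K"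
      note g = KK2(1)[OF gh] and h = KK2(1)[OF gh(2) gh(2)] and gh2 = KK2(2)[OF gh]
      have t1: "cnt X (\<psi> (g \<otimes>\<^bsub>G\<^esub> h)) (\<lambda>x. \<psi> g (\<psi> h x)) \<le> cnt X (\<psi> (g \<otimes>\<^bsub>G\<^esub> h)) (\<phi> (g \<otimes>\<^bsub>G\<^esub> h)) + cnt X (\<phi> (g \<otimes>\<^bsub>G\<^esub> h)) (\<lambda>x. \<psi> g (\<psi> h x))"
        by (rule cnt_tri[OF X(1)])
      have t2: "cnt X (\<phi> (g \<otimes>\<^bsub>G\<^esub> h)) (\<lambda>x. \<psi> g (\<psi> h x)) \<le> cnt X (\<phi> (g \<otimes>\<^bsub>G\<^esub> h)) (\<lambda>x. \<phi> g (\<phi> h x)) + cnt X (\<lambda>x. \<phi> g (\<phi> h x)) (\<lambda>x. \<psi> g (\<psi> h x))"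
        by (rule cnt_tri[OF X(1)])
      have t3: "cnt X (\<lambda>x. \<phi> g (\<phi> h x)) (\<lambda>x. \<psi> g (\<psi> h x)) \<le> cnt X (\<lambda>x. \<phi> g (\<phi> h x)) (\<lambda>x. \<psi> g (\<phi> h x)) + cnt X (\<lambda>x. \<psi> g (\<phi> h x)) (\<lambda>x. \<psi> g (\<psi> h x))"
        by (rule cnt_tri[OF X(1)])
      have t4: "cnt X (\<lambda>x. \<phi> g (\<phi> h x)) (\<lambda>x. \<psi> g (\<phi> h x)) \<le> 2 * cnt X (\<phi> h) (\<psi> h) + cnt X (\<phi> g) (\<psi> g)"
        by (rule cnt_comp_right[OF X(1) bij])
      have t5: "cnt X (\<lambda>x. \<psi> g (\<phi> h x)) (\<lambda>x. \<psi> g (\<psi> h x)) \<le> cnt X (\<phi> h) (\<psi> h)"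
        by (rule cnt_comp_left[OF X(1)])
      have en: "e * n = 11 * (d * n)" using d(2) by (simp add: mult.assoc[symmetric])
      have dn: "2 * d * n = 2 * (d * n)" by simp
      have "cnt X (\<psi> (g \<otimes>\<^bsub>G\<^esub> h)) (\<lambda>x. \<psi> g (\<psi> h x)) \<le> e * n"
        using t1 t2 t3 t4 t5 \<psi>[OF gh2] \<psi>'[OF g] \<psi>'[OF h] mor'[OF g h] en dn by linarith
      then show "hamming X (\<psi> (g \<otimes>\<^bsub>G\<^esub> h)) (\<psi> g \<circ> \<psi> h) \<le> e"
        using ham_le[OF X] unfolding n_def by (simp add: comp_def)
    next
      fix g h assume gh: "g \<in> K" "h \<in> K" "g \<noteq> h"
      note g = KK2(1)[OF gh(1) gh(1)] and h = KK2(1)[OF gh(2) gh(2)]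
      have "cnt X (\<phi> g) (\<phi> h) \<le> cnt X (\<phi> g) (\<psi> g) + cnt X (\<psi> g) (\<phi> h)"
        by (rule cnt_tri[OF X(1)])
      moreover have "cnt X (\<psi> g) (\<phi> h) \<le> cnt X (\<psi> g) (\<psi> h) + cnt X (\<psi> h) (\<phi> h)"
        by (rule cnt_tri[OF X(1)])
      moreover have "n \<ge> 0" unfolding n_def by simp
      moreover have "e * n = 11 * (d * n)" using d(2) by (simp add: mult.assoc[symmetric])
      moreover have "n - d * n \<le> cnt X (\<phi> g) (\<phi> h)" using inj'[OF g h gh(3)] by (simp add: algebra_simps)
      moreover have "cnt X (\<psi> g) (\<phi> g) \<le> 2 * (d * n)" using \<psi>[OF g] by simp
      moreover have "cnt X (\<phi> g) (\<psi> g) \<le> 2 * (d * n)" using \<psi>'[OF g] by simp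
      moreover have "cnt X (\<psi> h) (\<phi> h) \<le> 2 * (d * n)" using \<psi>[OF h] by simp
      moreover have "d * n \<ge> 0" using d \<open>n \<ge> 0\<close> by simp
      ultimately have "n - e * n \<le> cnt X (\<psi> g) (\<psi> h)" by linarith
      hence "(1 - e) * n \<le> cnt X (\<psi> g) (\<psi> h)" by (simp add: algebra_simps)
      then show "1 - e \<le> hamming X (\<psi> g) (\<psi> h)"
        using ham_ge[OF X] unfolding n_def by simp
    qed
  qed
qed

end
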